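(* Let $p_{global}^{min}\in(0,1)$ satisfy $p_{global}^{min}\le\min_j p_j^{min}$, and suppose that for every node $\ell$, $$\frac{(N-1)(1-p_{global}^{min})^{N-2}}{e^{\rho_{\ell2}}(\alpha_\ell+1)}<1.$$ Then the game $\mathcal{G}$ has a unique Nash equilibrium $\mathbf{P}^{NE}$, and the best-response iteration $\mathbf{P}(t+1)=f^{br}(\mathbf{P}(t))$, started from any $\mathbf{P}(1)\in\prod_{\ell}[p_\ell^{min},1]$, converges to $\mathbf{P}^{NE}$.
   Context: Game $\mathcal{G}$: $N$ nodes (players); node $\ell$ has parameters $c_\ell>0$, $\rho_{\ell1}>0$, $\rho_{\ell2}>0$, $p_\ell^{min}\in(0,1)$, and $\alpha_\ell=c_\ell\rho_{\ell1}$. For $\mathbf{P}=(p_1,\dots,p_N)$, with $1/b_\ell:=e^{-\rho_{\ell2}}\prod_{k\neq\ell}(1-p_k)$, the virtual utility of node $\ell$ is $$U_\ell(p_\ell;\mathbf{P}_{-\ell})=-\frac{e^{-\alpha_\ell p_\ell}}{\alpha_\ell}-\frac{p_\ell^2}{2}\Big(1+\frac{1}{b_\ell}\Big)+\frac{1+\alpha_\ell}{\alpha_\ell}.$$ Node $\ell$'s action set is $[p_\ell^{min},1]$. The best-response map $f^{br}:\prod_\ell[p_\ell^{min},1]\to\prod_\ell[p_\ell^{min},1]$ has components $f^{br}(\mathbf{P})_\ell=\arg\max_{p\in[p_\ell^{min},1]}U_\ell(p;\mathbf{P}_{-\ell})$ (unique by strict concavity). A Nash equilibrium is a $\mathbf{P}^{NE}$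 with $f^{br}(\mathbf{P}^{NE})=\mathbf{P}^{NE}$. *)

theory Defs
  imports "HOL-Analysis.Analysis"
begin

text \<open>Nodes are 0..<N. A strategy profile is a function P :: nat \<Rightarrow> real,
  extensional (zero) outside {0..<N}.\<close>

definition alpha :: "(nat \<Rightarrow> real) \<Rightarrow> (nat \<Rightarrow> real) \<Rightarrow> nat \<Rightarrow> real" where
  "alpha c rho1 l = c l * rho1 l"

text \<open>inv_b = 1/b_l = exp(-rho_l2) * prod_{k \<noteq> l} (1 - p_k)\<close>
definition inv_b :: "nat \<Rightarrow> (nat \<Rightarrow> real) \<Rightarrow> (nat \<Rightarrow> real) \<Rightarrow> nat \<Rightarrow> real" where
  "inv_b N rho2 P l = exp (- rho2 l) * (\<Prod>k\<in>{0..<N} - {l}. (1 - P k))"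

definition utility :: "nat \<Rightarrow> (nat \<Rightarrow> real) \<Rightarrow> (nat \<Rightarrow> real) \<Rightarrow> (nat \<Rightarrow> real)
    \<Rightarrow> nat \<Rightarrow> real \<Rightarrow> (nat \<Rightarrow> real) \<Rightarrow> real" where
  "utility N c rho1 rho2 l p P =
     (let a = alpha c rho1 l in
      - exp (- a * p) / a - p\<^sup>2 / 2 * (1 + inv_b N rho2 P l) + (1 + a) / a)"

definition strategy_space :: "nat \<Rightarrow> (nat \<Rightarrow> real) \<Rightarrow> (nat \<Rightarrow> real) set" where
  "strategy_space N pmin = {P. (\<forall>l<N. pmin l \<le> P l \<and> P l \<le> 1) \<and> (\<forall>l\<ge>N. P l = 0)}"

text \<open>Best response: the (unique) maximiser over [pmin_l, 1]. U_l depends on P only via P_{-l}.\<close>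
definition best_response :: "nat \<Rightarrow> (nat \<Rightarrow> real) \<Rightarrow> (nat \<Rightarrow> real) \<Rightarrow> (nat \<Rightarrow> real)
    \<Rightarrow> (nat \<Rightarrow> real) \<Rightarrow> (nat \<Rightarrow> real) \<Rightarrow> (nat \<Rightarrow> real)" where
  "best_response N c rho1 rho2 pmin P = (\<lambda>l. if l < N then
      (THE p. p \<in> {pmin l..1} \<and>
         (\<forall>q\<in>{pmin l..1}. utility N c rho1 rho2 l q P \<le> utility N c rho1 rho2 l p P))
     else 0)"

definition nash_equilibrium :: "nat \<Rightarrow> (nat \<Rightarrow> real) \<Rightarrow> (nat \<Rightarrow> real) \<Rightarrow> (nat \<Rightarrow> real)
    \<Rightarrow> (nat \<Rightarrow> real) \<Rightarrow> (nat \<Rightarrow> real) \<Rightarrow> bool" where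
  "nash_equilibrium N c rho1 rho2 pmin P \<longleftrightarrow>
     P \<in> strategy_space N pmin \<and> best_response N c rho1 rho2 pmin P = P"

end

theory Submission
  imports Defs
begin

lemma fun_tendsto:
  fixes f :: "nat \<Rightarrow> nat \<Rightarrow> real"
  assumes "\<And>i. (\<lambda>t. f t i) \<longlonglongrightarrow> l i"
  shows "f \<longlonglongrightarrow> l"
proof -
  have "limitin (product_topology (\<lambda>i. euclidean) UNIV) f l sequentially"
    using assms by (simp add: limitin_componentwise)
  thus ?thesis by (simp add: euclidean_product_topology)
qed

lemma u_deriv:
  fixes a B :: real assumes "a > 0"
  shows "((\<lambda>q. - exp (- a * q) / a - q\<^sup>2 / 2 * (1 + B) + (1 + a) / a)
          has_real_derivative (exp (- a * q) - q * (1 + B))) (at q)"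
  using assms by (auto intro!: derivative_eq_intros simp: field_simps power2_eq_square)

lemma u_strict:
  fixes a B lo r q :: real
  assumes a: "a > 0" and B: "B \<ge> 0" and r: "exp (- a * r) = r * (1 + B)"
    and q: "q \<noteq> max lo r" "lo \<le> q"
  defines "u \<equiv> (\<lambda>q. - exp (- a * q) / a - q\<^sup>2 / 2 * (1 + B) + (1 + a) / a)"
  shows "u q < u (max lo r)"
proof -
  define g where "g = (\<lambda>q. exp (- a * q) - q * (1 + B))"
  have der: "\<And>x. DERIV u x :> g x" unfolding u_def g_def using u_deriv[OF a] .
  have gpos: "g z > 0" if "z < r" for z
  proof -
    have "exp (- a * r) < exp (- a * z)" using a that by simp
    moreover have "z * (1 + B) \<le> r * (1 + B)" using B that by (intro mult_right_mono) auto
    ultimately show ?thesis unfolding g_def using r by linarith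
  qed
  have gneg: "g z < 0" if "z > r" for z
  proof -
    have "exp (- a * z) < exp (- a * r)" using a that by simp
    moreover have "z * (1 + B) \<ge> r * (1 + B)" using B that by (intro mult_right_mono) auto
    ultimately show ?thesis unfolding g_def using r by linarith
  qed
  show ?thesis
  proof (cases "q < max lo r")
    case True
    hence mr: "max lo r = r" "q < r" using q by auto
    obtain z where z: "q < z" "z < r" "u r - u q = (r - q) * g z"
      using MVT2[OF mr(2), of u g] der by blast
    have "(r - q) * g z > 0" using z gpos by simp
    thus ?thesis using z mr by simp
  next
    case False
    hence lt: "max lo r < q" using q by auto
    obtain z where z: "max lo r < z" "z < q" "u q - u (max lo r) = (q - max lo r) * g z"
      using MVT2[OF lt, of u g] der by blast
    have "(q - max lo r) * g z < 0" using z gneg lt by (intro mult_pos_neg) auto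
    thus ?thesis using z by simp
  qed
qed

lemma root_exists:
  fixes a B :: real assumes a: "a > 0" and B: "B \<ge> 0"
  shows "\<exists>r. 0 < r \<and> r < 1 \<and> exp (- a * r) = r * (1 + B)"
proof -
  define g where "g = (\<lambda>q. exp (- a * q) - q * (1 + B))"
  have c: "continuous_on {0..1} g" unfolding g_def by (intro continuous_intros)
  have g0: "g 0 > 0" unfolding g_def by simp
  have "exp (- a) < 1" using a by simp
  hence "exp (- a) < 1 + B" using B by linarith
  hence g1: "g 1 < 0" unfolding g_def by simp
  obtain r where r: "0 \<le> r" "r \<le> 1" "g r = 0"
    using IVT2'[of g 1 0 0] c g0 g1 by force
  have "r \<noteq> 0" using r g0 by auto
  moreover have "r \<noteq> 1" using r g1 by auto
  ultimately show ?thesis using r unfolding g_def by (intro exI[of _ r]) auto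
qed

lemma root_lip:
  fixes a B1 B2 r1 r2 :: real
  assumes a: "a > 0" and B1: "0 \<le> B1" and B12: "B1 \<le> B2"
    and r1: "0 \<le> r1" "r1 \<le> 1" "exp (- a * r1) = r1 * (1 + B1)"
    and r2: "0 \<le> r2" "r2 \<le> 1" "exp (- a * r2) = r2 * (1 + B2)"
  shows "r2 \<le> r1 \<and> r1 - r2 \<le> (B2 - B1) / (1 + a)"
proof -
  have le: "r2 \<le> r1"
  proof (rule ccontr)
    assume "\<not> r2 \<le> r1"
    hence lt: "r1 < r2" by simp
    have "exp (- a * r2) < exp (- a * r1)" using a lt by simp
    moreover have "r1 * (1 + B1) \<le> r2 * (1 + B2)" using lt B1 B12 r1 by (intro mult_mono) auto
    ultimately show False using r1 r2 by linarith
  qed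
  have "exp (- a * r2) = exp (- a * r1) * exp (a * (r1 - r2))"
    by (simp add: exp_add[symmetric] algebra_simps)
  also have "\<dots> \<ge> exp (- a * r1) * (1 + a * (r1 - r2))"
    by (intro mult_left_mono) auto
  finally have "r2 * (1 + B2) \<ge> r1 * (1 + B1) * (1 + a * (r1 - r2))" using r1 r2 by simp
  hence "(r1 - r2) * (1 + B1) * (1 + a * r1) \<le> r2 * (B2 - B1)"
    by (simp add: algebra_simps)
  moreover have "(r1 - r2) * (1 + a * r1) \<le> (r1 - r2) * (1 + B1) * (1 + a * r1)"
  proof -
    have "0 \<le> (r1 - r2) * (1 + a * r1)" using le a r1 by simp
    hence "(r1 - r2) * (1 + a * r1) * 1 \<le> (r1 - r2) * (1 + a * r1) * (1 + B1)"
      using B1 by (intro mult_left_mono) auto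
    thus ?thesis by (simp add: algebra_simps)
  qed
  moreover have "r2 * (B2 - B1) \<le> r1 * (B2 - B1)" using le B12 by (intro mult_right_mono) auto
  moreover have "(r1 - r2) * (1 + a) * r1 \<le> (r1 - r2) * (1 + a * r1)"
  proof -
    have "r1 * (1 + a) \<le> 1 + a * r1" using r1 a by (simp add: algebra_simps)
    hence "(r1 - r2) * (r1 * (1 + a)) \<le> (r1 - r2) * (1 + a * r1)"
      by (rule mult_left_mono) (use le in auto)
    thus ?thesis by (simp add: algebra_simps)
  qed
  ultimately have *: "(r1 - r2) * (1 + a) * r1 \<le> (B2 - B1) * r1" by (simp add: algebra_simps)
  have "r1 > 0"
  proof -
    have "exp (- a * r1) > 0" by simp
    thus ?thesis using r1 by (metis less_eq_real_def mult_zero_left)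
  qed
  hence "(r1 - r2) * (1 + a) \<le> B2 - B1" using * by simp
  thus ?thesis using le a by (simp add: field_simps)
qed


lemma prod_diff_bound:
  fixes x y :: "nat \<Rightarrow> real"
  assumes "finite S" "\<forall>k\<in>S. 0 \<le> x k \<and> x k \<le> M \<and> 0 \<le> y k \<and> y k \<le> M \<and> \<bar>x k - y k\<bar> \<le> d"
    "0 \<le> M" "0 \<le> d"
  shows "\<bar>prod x S - prod y S\<bar> \<le> real (card S) * M ^ (card S - 1) * d"
  using assms
proof (induction S rule: finite_induct)
  case empty
  then show ?case by simp
next
  case (insert a F)
  define n where "n = card F"
  have IH: "\<bar>prod x F - prod y F\<bar> \<le> real n * M ^ (n - 1) * d"
    using insert by (simp add: n_def)
  have Y0: "0 \<le> prod y F" using insert by (intro prod_nonneg) auto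
  have YM: "prod y F \<le> M ^ n"
  proof -
    have "prod y F \<le> prod (\<lambda>_. M) F" using insert by (intro prod_mono) auto
    thus ?thesis by (simp add: n_def)
  qed
  have xa: "0 \<le> x a" "x a \<le> M" "\<bar>x a - y a\<bar> \<le> d" using insert by auto
  have eq: "prod x (insert a F) - prod y (insert a F)
      = x a * (prod x F - prod y F) + (x a - y a) * prod y F"
    using insert by (simp add: algebra_simps)
  have "\<bar>x a * (prod x F - prod y F)\<bar> \<le> M * (real n * M ^ (n - 1) * d)"
    unfolding abs_mult using xa IH by (intro mult_mono) auto
  moreover have "\<bar>(x a - y a) * prod y F\<bar> \<le> d * M ^ n"
    unfolding abs_mult using xa Y0 YM insert.prems by (intro mult_mono) auto
  moreover have "M * (real n * M ^ (n - 1) * d) + d * M ^ n = real (Suc n) * M ^ n * d"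
    by (cases n) (auto simp: algebra_simps)
  ultimately have "\<bar>prod x (insert a F) - prod y (insert a F)\<bar> \<le> real (Suc n) * M ^ n * d"
    unfolding eq by (smt (verit) abs_triangle_ineq)
  thus ?case using insert by (simp add: n_def)
qed

lemma br_eq:
  fixes a B lo r :: real
  assumes a: "a > 0" and B: "B \<ge> 0" and lo: "lo \<le> 1"
    and r: "0 < r" "r < 1" "exp (- a * r) = r * (1 + B)"
  defines "u \<equiv> (\<lambda>q. - exp (- a * q) / a - q\<^sup>2 / 2 * (1 + B) + (1 + a) / a)"
  shows "(THE p. p \<in> {lo..1} \<and> (\<forall>q\<in>{lo..1}. u q \<le> u p)) = max lo r"
proof (rule the_equality)
  show "max lo r \<in> {lo..1} \<and> (\<forall>q\<in>{lo..1}. u q \<le> u (max lo r))"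
  proof -
    have "\<forall>q\<in>{lo..1}. u q \<le> u (max lo r)"
    proof
      fix q assume q: "q \<in> {lo..1}"
      show "u q \<le> u (max lo r)"
      proof (cases "q = max lo r")
        case False
        thus ?thesis using u_strict[OF a B r(3), of q lo] q unfolding u_def by auto
      qed simp
    qed
    thus ?thesis using lo r by auto
  qed
next
  fix p assume p: "p \<in> {lo..1} \<and> (\<forall>q\<in>{lo..1}. u q \<le> u p)"
  have m: "max lo r \<in> {lo..1}" using lo r by auto
  show "p = max lo r"
  proof (rule ccontr)
    assume "p \<noteq> max lo r"
    hence "u p < u (max lo r)" using u_strict[OF a B r(3)] p unfolding u_def by auto
    moreover have "u (max lo r) \<le> u p" using p m by blast
    ultimately show False by linarith
  qed
qed


lemma conv_by_bound:
  fixes X :: "nat \<Rightarrow> real"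
  assumes "\<And>t. \<bar>X t - c\<bar> \<le> kk ^ t" "0 \<le> kk" "kk < 1"
  shows "X \<longlonglongrightarrow> c"
proof -
  have n: "norm kk < 1" using assms(2,3) by simp
  have lim: "(\<lambda>t. kk ^ t) \<longlonglongrightarrow> 0" by (rule LIMSEQ_power_zero[OF n])
  have "\<forall>t. norm (X t - c) \<le> kk ^ t" using assms(1) by simp
  hence ev: "eventually (\<lambda>t. norm (X t - c) \<le> kk ^ t) sequentially" by (rule always_eventually)
  have "(\<lambda>t. X t - c) \<longlonglongrightarrow> 0" by (rule Lim_null_comparison[OF ev lim])
  thus ?thesis by (rule Lim_null[THEN iffD2])
qed

lemma inv_b_nonneg:
  assumes "\<forall>k<N. P k \<le> 1"
  shows "0 \<le> inv_b N rho2 P l"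
proof -
  have "\<forall>k\<in>{0..<N} - {l}. 0 \<le> 1 - P k" using assms by simp
  hence "0 \<le> (\<Prod>k\<in>{0..<N} - {l}. (1 - P k))" by (intro prod_nonneg) blast
  thus ?thesis unfolding inv_b_def by simp
qed

lemma br_form:
  assumes a: "alpha c rho1 l > 0" and l: "l < N" and lo: "pmin l \<le> 1"
    and P: "\<forall>k<N. P k \<le> 1"
  shows "\<exists>r. 0 < r \<and> r < 1 \<and>
     exp (- alpha c rho1 l * r) = r * (1 + inv_b N rho2 P l) \<and>
     best_response N c rho1 rho2 pmin P l = max (pmin l) r"
proof -
  have B: "0 \<le> inv_b N rho2 P l" using inv_b_nonneg[OF P] .
  obtain r where r: "0 < r" "r < 1" "exp (- alpha c rho1 l * r) = r * (1 + inv_b N rho2 P l)"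
    using root_exists[OF a B] by blast
  define A where "A = alpha c rho1 l"
  define BB where "BB = inv_b N rho2 P l"
  have U: "\<And>q. utility N c rho1 rho2 l q P = - exp (- A * q) / A - q\<^sup>2 / 2 * (1 + BB) + (1 + A) / A"
    unfolding utility_def Let_def A_def BB_def by (rule refl)
  have "best_response N c rho1 rho2 pmin P l = (THE p. p \<in> {pmin l..1} \<and>
         (\<forall>q\<in>{pmin l..1}. utility N c rho1 rho2 l q P \<le> utility N c rho1 rho2 l p P))"
    unfolding best_response_def using l by (simp only: if_True)
  also have "\<dots> = max (pmin l) r"
    unfolding U using br_eq[OF a B lo r] unfolding A_def BB_def .
  finally have "best_response N c rho1 rho2 pmin P l = max (pmin l) r" .
  thus ?thesis using r by blast
qed

lemma contraction:
  assumes a: "alpha c rho1 l > 0" and l: "l < N" and lo: "pmin l \<le> 1"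
    and pg: "0 < pg" "pg < 1"
    and P: "\<forall>k<N. pg \<le> P k \<and> P k \<le> 1" and Q: "\<forall>k<N. pg \<le> Q k \<and> Q k \<le> 1"
    and d: "0 \<le> d" "\<forall>k<N. \<bar>P k - Q k\<bar> \<le> d"
  shows "\<bar>best_response N c rho1 rho2 pmin P l - best_response N c rho1 rho2 pmin Q l\<bar>
     \<le> (real N - 1) * (1 - pg) ^ (N - 2) / (exp (rho2 l) * (alpha c rho1 l + 1)) * d"
proof -
  define a where "a = alpha c rho1 l"
  define B1 where "B1 = inv_b N rho2 P l"
  define B2 where "B2 = inv_b N rho2 Q l"
  obtain r1 where r1: "0 < r1" "r1 < 1" "exp (- a * r1) = r1 * (1 + B1)"
    "best_response N c rho1 rho2 pmin P l = max (pmin l) r1"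
    using br_form[of c rho1 l N pmin P rho2, OF a l lo] P unfolding a_def B1_def by blast
  obtain r2 where r2: "0 < r2" "r2 < 1" "exp (- a * r2) = r2 * (1 + B2)"
    "best_response N c rho1 rho2 pmin Q l = max (pmin l) r2"
    using br_form[of c rho1 l N pmin Q rho2, OF a l lo] Q unfolding a_def B2_def by blast
  have B1: "0 \<le> B1" unfolding B1_def using P by (intro inv_b_nonneg) auto
  have B2: "0 \<le> B2" unfolding B2_def using Q by (intro inv_b_nonneg) auto
  have a0: "a > 0" using a a_def by simp
  have rr: "\<bar>r1 - r2\<bar> \<le> \<bar>B1 - B2\<bar> / (1 + a)"
  proof (cases "B1 \<le> B2")
    case True
    have h: "r2 \<le> r1 \<and> r1 - r2 \<le> (B2 - B1) / (1 + a)"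
      by (rule root_lip[OF a0 B1 True]) (use r1 r2 in simp_all)
    have "\<bar>r1 - r2\<bar> = r1 - r2" "\<bar>B1 - B2\<bar> = B2 - B1" using h True by auto
    thus ?thesis using h by simp
  next
    case False
    have h: "r1 \<le> r2 \<and> r2 - r1 \<le> (B1 - B2) / (1 + a)"
      by (rule root_lip[OF a0 B2]) (use r1 r2 False in simp_all)
    have "\<bar>r1 - r2\<bar> = r2 - r1" "\<bar>B1 - B2\<bar> = B1 - B2" using h False by auto
    thus ?thesis using h by simp
  qed
  define S where "S = {0..<N} - {l}"
  have cS: "card S = N - 1" unfolding S_def using l by simp
  have pb: "\<bar>prod (\<lambda>k. 1 - P k) S - prod (\<lambda>k. 1 - Q k) S\<bar>
      \<le> real (card S) * (1 - pg) ^ (card S - 1) * d"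
    using P Q d pg unfolding S_def by (intro prod_diff_bound) auto
  have "\<bar>B1 - B2\<bar> = exp (- rho2 l) * \<bar>prod (\<lambda>k. 1 - P k) S - prod (\<lambda>k. 1 - Q k) S\<bar>"
    unfolding B1_def B2_def inv_b_def S_def by (simp add: abs_mult right_diff_distrib[symmetric])
  also have "\<dots> \<le> exp (- rho2 l) * ((real N - 1) * (1 - pg) ^ (N - 2) * d)"
  proof -
    have "real (card S) * (1 - pg) ^ (card S - 1) * d = (real N - 1) * (1 - pg) ^ (N - 2) * d"
      using cS l by (simp add: of_nat_diff diff_diff_left numeral_2_eq_2)
    thus ?thesis using pb by (intro mult_left_mono) auto
  qed
  finally have BB: "\<bar>B1 - B2\<bar> \<le> exp (- rho2 l) * ((real N - 1) * (1 - pg) ^ (N - 2) * d)" .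
  have "\<bar>max (pmin l) r1 - max (pmin l) r2\<bar> \<le> \<bar>r1 - r2\<bar>" by (simp add: max_def)
  also have "\<dots> \<le> \<bar>B1 - B2\<bar> / (1 + a)" by (rule rr)
  also have "\<dots> \<le> exp (- rho2 l) * ((real N - 1) * (1 - pg) ^ (N - 2) * d) / (1 + a)"
    by (rule divide_right_mono[OF BB]) (use a0 in simp)
  also have "\<dots> = (real N - 1) * (1 - pg) ^ (N - 2) / (exp (rho2 l) * (a + 1)) * d"
    by (simp add: exp_minus field_simps)
  finally show ?thesis unfolding r1(4) r2(4) a_def .
qed


theorem theorem5:
  fixes N :: nat and c rho1 rho2 pmin :: "nat \<Rightarrow> real" and pg :: real
  assumes c_pos: "\<forall>l<N. c l > 0"
    and rho1_pos: "\<forall>l<N. rho1 l > 0"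
    and rho2_pos: "\<forall>l<N. rho2 l > 0"
    and pmin_range: "\<forall>l<N. 0 < pmin l \<and> pmin l < 1"
    and pg_range: "0 < pg" "pg < 1"
    and pg_le: "\<forall>j<N. pg \<le> pmin j"
    and cond: "\<forall>l<N. (real N - 1) * (1 - pg) powr (real N - 2)
                       / (exp (rho2 l) * (alpha c rho1 l + 1)) < 1"
  shows "\<exists>!PNE. nash_equilibrium N c rho1 rho2 pmin PNE \<and>
           (\<forall>P1 \<in> strategy_space N pmin.
              (\<lambda>t. (best_response N c rho1 rho2 pmin ^^ t) P1) \<longlonglongrightarrow> PNE)"
proof -
  define f where "f = best_response N c rho1 rho2 pmin"
  define S where "S = strategy_space N pmin"
  define K where "K l = (real N - 1) * (1 - pg) ^ (N - 2) / (exp (rho2 l) * (alpha c rho1 l + 1))" for l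
  have apos: "\<forall>l<N. alpha c rho1 l > 0" using c_pos rho1_pos by (simp add: alpha_def)
  have Kc: "\<forall>l<N. K l < 1"
  proof (intro allI impI)
    fix l assume l: "l < N"
    have "K l = (real N - 1) * (1 - pg) powr (real N - 2) / (exp (rho2 l) * (alpha c rho1 l + 1))"
    proof (cases "N = 1")
      case True thus ?thesis by (simp add: K_def)
    next
      case False
      hence N2: "N \<ge> 2" using l by auto
      hence e: "real N - 2 = real (N - 2)" by (simp add: of_nat_diff)
      have "(1 - pg) powr (real N - 2) = (1 - pg) ^ (N - 2)"
        unfolding e using pg_range by (simp add: powr_realpow)
      thus ?thesis unfolding K_def by simp
    qed
    thus "K l < 1" using cond l by simp
  qed
  have K0: "\<forall>l<N. 0 \<le> K l"
  proof (intro allI impI)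
    fix l assume l: "l < N"
    have "0 \<le> real N - 1" using l by simp
    moreover have "0 \<le> (1 - pg) ^ (N - 2)" using pg_range by simp
    moreover have "0 < exp (rho2 l) * (alpha c rho1 l + 1)"
    proof -
      have "0 < alpha c rho1 l" using apos l by blast
      hence "0 < alpha c rho1 l + 1" by simp
      thus ?thesis by (intro mult_pos_pos) simp_all
    qed
    ultimately show "0 \<le> K l" unfolding K_def by simp
  qed
  define kk where "kk = Max (insert 0 (K ` {..<N}))"
  have kk0: "0 \<le> kk" unfolding kk_def by (rule Max_ge) auto
  have kk1: "kk < 1" unfolding kk_def using Kc by (subst Max_less_iff) auto
  have Kkk: "\<forall>l<N. K l \<le> kk" unfolding kk_def by (auto intro: Max_ge)
  have Sdef: "P \<in> S \<longleftrightarrow> (\<forall>l<N. pmin l \<le> P l \<and> P l \<le> 1) \<and> (\<forall>l\<ge>N. P l = 0)" for P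
    by (simp add: S_def strategy_space_def)
  have fout: "f P l = 0" if "\<not> l < N" for P l using that by (simp add: f_def best_response_def)
  have fS: "f P \<in> S" if P: "P \<in> S" for P
  proof -
    have P1: "\<forall>k<N. P k \<le> 1" using P Sdef by auto
    have "pmin l \<le> f P l \<and> f P l \<le> 1" if l: "l < N" for l
    proof -
      have "\<exists>r. 0 < r \<and> r < 1 \<and>
         exp (- alpha c rho1 l * r) = r * (1 + inv_b N rho2 P l) \<and>
         best_response N c rho1 rho2 pmin P l = max (pmin l) r"
        by (rule br_form) (use apos l pmin_range P1 in auto)
      then obtain r where "r < 1" "f P l = max (pmin l) r" unfolding f_def by blast
      thus ?thesis using pmin_range l by auto
    qed
    thus "f P \<in> S" using fout by (simp add: Sdef)
  qed
  have fpow: "(f ^^ t) P \<in> S" if "P \<in> S" for P t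
    using that by (induction t) (auto intro: fS)
  have contr: "\<forall>k. \<bar>f P k - f Q k\<bar> \<le> kk * d"
    if P: "P \<in> S" and Q: "Q \<in> S" and d: "0 \<le> d" "\<forall>k<N. \<bar>P k - Q k\<bar> \<le> d" for P Q d
  proof
    fix k
    show "\<bar>f P k - f Q k\<bar> \<le> kk * d"
    proof (cases "k < N")
      case True
      have P': "\<forall>k<N. pg \<le> P k \<and> P k \<le> 1" using P pg_le unfolding Sdef by (meson order_trans)
      have Q': "\<forall>k<N. pg \<le> Q k \<and> Q k \<le> 1" using Q pg_le unfolding Sdef by (meson order_trans)
      have lo: "pmin k \<le> 1" using pmin_range True by auto
      have "\<bar>f P k - f Q k\<bar> \<le> K k * d"
        unfolding f_def K_def
        by (rule contraction[of c rho1 k N pmin pg P Q d rho2, OF _ True lo pg_range P' Q' d]) (use apos True in auto)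
      also have "\<dots> \<le> kk * d" using Kkk True d by (intro mult_right_mono) auto
      finally show ?thesis .
    next
      case False
      thus ?thesis using fout kk0 d by simp
    qed
  qed
  have iter: "\<forall>k. \<bar>(f ^^ t) P k - (f ^^ t) Q k\<bar> \<le> kk ^ t" if P: "P \<in> S" and Q: "Q \<in> S" for P Q t
  proof (induction t)
    case 0
    show ?case
    proof
      fix k
      show "\<bar>(f ^^ 0) P k - (f ^^ 0) Q k\<bar> \<le> kk ^ 0"
      proof (cases "k < N")
        case True
        hence "pmin k \<le> P k" "P k \<le> 1" "pmin k \<le> Q k" "Q k \<le> 1" "0 < pmin k"
          using P Q pmin_range unfolding Sdef by auto
        thus ?thesis by simp
      next
        case False thus ?thesis using P Q unfolding Sdef by simp
      qed
    qed
  next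
    case (Suc t)
    have "\<forall>k. \<bar>f ((f ^^ t) P) k - f ((f ^^ t) Q) k\<bar> \<le> kk * kk ^ t"
      by (rule contr) (use fpow P Q Suc.IH kk0 in auto)
    thus ?case by simp
  qed
  define P0 where "P0 = (\<lambda>l. if l < N then 1 else 0 :: real)"
  have P0S: "P0 \<in> S" using pmin_range by (simp add: Sdef P0_def less_imp_le)
  define x where "x t = (f ^^ t) P0" for t
  have xS: "x t \<in> S" for t unfolding x_def by (rule fpow[OF P0S])
  have xstep: "\<bar>x (Suc t) k - x t k\<bar> \<le> kk ^ t" for t k
  proof -
    have "x (Suc t) = (f ^^ t) (f P0)" unfolding x_def by (simp add: funpow_swap1)
    thus ?thesis using iter[OF fS[OF P0S] P0S, of t] unfolding x_def by simp
  qed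
  have xmt: "\<bar>x (m + t) k - x t k\<bar> \<le> kk ^ t" for t m k
  proof -
    have "x (m + t) = (f ^^ t) (x m)" unfolding x_def by (simp only: add.commute[of m t] funpow_add comp_def)
    thus ?thesis using iter[OF xS P0S, of t] unfolding x_def by simp
  qed
  define L where "L k = x 0 k + (\<Sum>i. x (Suc i) k - x i k)" for k
  have xL: "(\<lambda>t. x t k) \<longlonglongrightarrow> L k" for k
  proof -
    have sg: "summable (\<lambda>i. kk ^ i)" using kk0 kk1 by (intro summable_geometric) simp
    have sm: "summable (\<lambda>i. x (Suc i) k - x i k)"
      by (rule summable_comparison_test'[OF sg]) (use xstep in simp)
    have "(\<lambda>t. x 0 k + (\<Sum>i<t. x (Suc i) k - x i k)) \<longlonglongrightarrow> L k"
      unfolding L_def by (intro tendsto_add tendsto_const summable_LIMSEQ[OF sm])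
    moreover have "(\<lambda>t. x 0 k + (\<Sum>i<t. x (Suc i) k - x i k)) = (\<lambda>t. x t k)"
      by (rule ext) (simp add: sum_lessThan_telescope[of "\<lambda>i. x i k"])
    ultimately show ?thesis by simp
  qed
  have LS: "L \<in> S"
  proof -
    have "pmin k \<le> L k \<and> L k \<le> 1" if k: "k < N" for k
    proof
      show "pmin k \<le> L k" by (rule LIMSEQ_le_const[OF xL]) (use xS k Sdef in auto)
      show "L k \<le> 1" by (rule LIMSEQ_le_const2[OF xL]) (use xS k Sdef in auto)
    qed
    moreover have "L k = 0" if k: "\<not> k < N" for k
    proof -
      have "(\<lambda>t. x t k) = (\<lambda>t. 0)" using xS k Sdef by auto
      thus ?thesis using xL[of k] by (simp add: LIMSEQ_const_iff)
    qed
    ultimately show ?thesis by (simp add: Sdef)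
  qed
  have xLb: "\<bar>x t k - L k\<bar> \<le> kk ^ t" for t k
  proof -
    have "(\<lambda>m. x (m + t) k) \<longlonglongrightarrow> L k" by (rule LIMSEQ_ignore_initial_segment[OF xL])
    hence "(\<lambda>m. \<bar>x (m + t) k - x t k\<bar>) \<longlonglongrightarrow> \<bar>L k - x t k\<bar>" by (intro tendsto_intros)
    hence "\<bar>L k - x t k\<bar> \<le> kk ^ t" by (rule LIMSEQ_le_const2) (use xmt in auto)
    thus ?thesis by (simp add: abs_minus_commute)
  qed
  have fixL: "f L = L"
  proof
    fix k
    have b: "\<bar>x (Suc t) k - f L k\<bar> \<le> kk ^ t" for t
    proof -
      have "\<forall>j. \<bar>f (x t) j - f L j\<bar> \<le> kk * kk ^ t"
        by (rule contr) (use xS LS xLb kk0 in auto)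
      hence "\<bar>x (Suc t) k - f L k\<bar> \<le> kk * kk ^ t" unfolding x_def by simp
      also have "\<dots> \<le> 1 * kk ^ t" using kk0 kk1 by (intro mult_right_mono) auto
      finally show ?thesis by simp
    qed
    have "(\<lambda>t. x (Suc t) k) \<longlonglongrightarrow> f L k" by (rule conv_by_bound[OF b kk0 kk1])
    moreover have "(\<lambda>t. x (Suc t) k) \<longlonglongrightarrow> L k" by (rule LIMSEQ_Suc[OF xL])
    ultimately show "f L k = L k" by (rule LIMSEQ_unique)
  qed
  have fixpow: "(f ^^ t) Q = Q" if "f Q = Q" for Q t using that by (induction t) auto
  have conv: "(\<lambda>t. (f ^^ t) P1) \<longlonglongrightarrow> L" if P1: "P1 \<in> S" for P1
  proof (rule fun_tendsto)
    fix i
    show "(\<lambda>t. (f ^^ t) P1 i) \<longlonglongrightarrow> L i"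
    proof (rule conv_by_bound[OF _ kk0 kk1])
      fix t
      show "\<bar>(f ^^ t) P1 i - L i\<bar> \<le> kk ^ t"
        using iter[OF P1 LS, of t] fixpow[OF fixL, of t] by simp
    qed
  qed
  have main: "\<exists>!PNE. (PNE \<in> S \<and> f PNE = PNE) \<and> (\<forall>P1\<in>S. (\<lambda>t. (f ^^ t) P1) \<longlonglongrightarrow> PNE)"
  proof (rule ex1I[of _ L])
    show "(L \<in> S \<and> f L = L) \<and> (\<forall>P1\<in>S. (\<lambda>t. (f ^^ t) P1) \<longlonglongrightarrow> L)"
      using LS fixL conv by blast
  next
    fix Q assume Q: "(Q \<in> S \<and> f Q = Q) \<and> (\<forall>P1\<in>S. (\<lambda>t. (f ^^ t) P1) \<longlonglongrightarrow> Q)"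
    show "Q = L"
    proof
      fix i
      have "(\<lambda>t. Q i) \<longlonglongrightarrow> L i"
      proof (rule conv_by_bound[OF _ kk0 kk1])
        fix t
        show "\<bar>Q i - L i\<bar> \<le> kk ^ t"
          using iter[OF _ LS, of Q t] Q fixpow[OF fixL, of t] fixpow[of Q t] by simp
      qed
      thus "Q i = L i" by (simp add: LIMSEQ_const_iff)
    qed
  qed
  thus ?thesis unfolding nash_equilibrium_def f_def S_def .
qed

end
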